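(* Let $F$ be a field, $n\in\mathbb N\cup\{\infty\}$, and let $\varphi:\mathrm{UT}(n,F)\to\mathrm{UT}(n,F)$ be an almost identity PC-map. Then for every $a\in\mathrm{UT}(n,F)$ we have $\varphi(a)_{ij}=a_{ij}$ and $(\varphi(a)^{-1})_{ij}=(a^{-1})_{ij}$ for all indices $i\ge 2$ and $j\le n-1$ (when $n=\infty$, $j\le n-1$ means $j$ arbitrary). In other words, $\varphi(a)$ and $a$ (and also their inverses) can differ only in the first row and the last column.
   Context: $F$ is a field and $n\in\mathbb N\cup\{\infty\}$. $\mathrm{UT}(n,F)$ is the group of upper unitriangular $n\times n$ matrices over $F$; for $n=\infty$ the rows and columns are indexed by $\mathbb N=\{1,2,\dots\}$ and $\mathrm{UT}(\infty,F)$ consists of all $\mathbb N\times\mathbb N$ matrices with $1$ on the diagonal and $0$ below it. Convention: $\infty+m=\infty$ for $m\in\mathbb Z$. $e$ is the identity matrix, $e_{ij}$ the matrix unit, $t_{ij}(\alpha)=e+\alpha e_{ij}$ ($i<j$, $\alpha\in F$) the elementary transvection. $a_{ij}$ denotes the $(i,j)$-entry of $a$. The group commutator is $[x,y]=xyx^{-1}y^{-1}$. A PC-map of a group $G$ is a bijection $\varphi:G\to G$ with $\varphi([x,y])=[\varphi(x),\varphi(y)]$ for all $x,y\in G$. A map $\varphi:\mathrm{UT}(n,F)\to\mathrm{UT}(n,F)$ is almost identity if $\varphi(t_{ij}(\alpha))=t_{ij}(\alpha)$ for all $i<j$ and $\alpha\in F$. *)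

theory Defs
  imports "HOL-Algebra.Group" "HOL-Library.Extended_Nat"
begin

text \<open>Matrices indexed by positive naturals; for n :: enat the index set is
  {1..n} (n finite) or all positive naturals (n = infinity). Entries outside the
  index set are required to be 0, so that each element of UT(n,F) has a unique
  representation.\<close>

type_synonym 'a nmat = "nat \<Rightarrow> nat \<Rightarrow> 'a"

definition idx :: "enat \<Rightarrow> nat set" where
  "idx n = {i. 1 \<le> i \<and> enat i \<le> n}"

definition UT_set :: "enat \<Rightarrow> ('a::field) nmat set" where
  "UT_set n = {a. (\<forall>i j. a i j \<noteq> 0 \<longrightarrow> i \<in> idx n \<and> j \<in> idx n \<and> i \<le> j)
                 \<and> (\<forall>i\<in>idx n. a i i = 1)}"

text \<open>Product of upper triangular matrices: the sum is finite since only
  indices i..j contribute.\<close>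
definition ut_mult :: "('a::field) nmat \<Rightarrow> 'a nmat \<Rightarrow> 'a nmat" where
  "ut_mult a b = (\<lambda>i j. \<Sum>k\<in>{i..j}. a i k * b k j)"

definition ut_one :: "enat \<Rightarrow> ('a::field) nmat" where
  "ut_one n = (\<lambda>i j. if i = j \<and> i \<in> idx n then 1 else 0)"

definition UT :: "enat \<Rightarrow> ('a::field) nmat monoid" where
  "UT n = \<lparr>carrier = UT_set n, mult = ut_mult, one = ut_one n\<rparr>"

definition comm :: "('g, 'b) monoid_scheme \<Rightarrow> 'g \<Rightarrow> 'g \<Rightarrow> 'g" where
  "comm G x y = x \<otimes>\<^bsub>G\<^esub> y \<otimes>\<^bsub>G\<^esub> inv\<^bsub>G\<^esub> x \<otimes>\<^bsub>G\<^esub> inv\<^bsub>G\<^esub> y"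

definition PC_map :: "('g, 'b) monoid_scheme \<Rightarrow> ('g \<Rightarrow> 'g) \<Rightarrow> bool" where
  "PC_map G \<phi> \<longleftrightarrow> bij_betw \<phi> (carrier G) (carrier G) \<and>
     (\<forall>x\<in>carrier G. \<forall>y\<in>carrier G. \<phi> (comm G x y) = comm G (\<phi> x) (\<phi> y))"

definition transv :: "enat \<Rightarrow> nat \<Rightarrow> nat \<Rightarrow> 'a::field \<Rightarrow> 'a nmat" where
  "transv n i j \<alpha> = (\<lambda>k l. ut_one n k l + (if k = i \<and> l = j then \<alpha> else 0))"

definition almost_identity :: "enat \<Rightarrow> (('a::field) nmat \<Rightarrow> 'a nmat) \<Rightarrow> bool" where
  "almost_identity n \<phi> \<longleftrightarrow>
     (\<forall>i\<in>idx n. \<forall>j\<in>idx n. \<forall>\<alpha>. i < j \<longrightarrow> \<phi> (transv n i j \<alpha>) = transv n i j \<alpha>)"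

end

theory Submission
  imports Defs
begin


lemma UT_zero:
  assumes "a \<in> UT_set n"
  shows "j < i \<Longrightarrow> a i j = 0" "i \<notin> idx n \<Longrightarrow> a i j = 0" "j \<notin> idx n \<Longrightarrow> a i j = 0"
  using assms unfolding UT_set_def by (auto simp: not_le[symmetric])

lemma UT_diag: "a \<in> UT_set n \<Longrightarrow> i \<in> idx n \<Longrightarrow> a i i = 1"
  unfolding UT_set_def by auto

lemma idx_between: "i \<in> idx n \<Longrightarrow> j \<in> idx n \<Longrightarrow> i \<le> k \<Longrightarrow> k \<le> j \<Longrightarrow> k \<in> idx n"
  unfolding idx_def by (metis (mono_tags) enat_ord_simps(1) mem_Collect_eq order_trans le_trans)

lemma triangle_swap:
  fixes f :: "nat \<Rightarrow> nat \<Rightarrow> 'b::comm_monoid_add"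
  shows "(\<Sum>k\<in>{i..j}. \<Sum>m\<in>{i..k}. f m k) = (\<Sum>m\<in>{i..j}. \<Sum>k\<in>{m..j}. f m k)"
proof -
  have "(\<Sum>k\<in>{i..j}. \<Sum>m\<in>{i..k}. f m k) = (\<Sum>k\<in>{i..j}. \<Sum>m\<in>{i..j}. if m \<le> k then f m k else 0)"
  proof (rule sum.cong[OF refl])
    fix k assume k: "k \<in> {i..j}"
    have "(\<Sum>m\<in>{i..j}. if m \<le> k then f m k else 0) = sum (\<lambda>m. f m k) {m\<in>{i..j}. m \<le> k}"
      by (rule sum.inter_filter[symmetric]) simp
    also have "{m\<in>{i..j}. m \<le> k} = {i..k}" using k by auto
    finally show "(\<Sum>m\<in>{i..k}. f m k) = (\<Sum>m\<in>{i..j}. if m \<le> k then f m k else 0)" by simp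
  qed
  also have "\<dots> = (\<Sum>m\<in>{i..j}. \<Sum>k\<in>{i..j}. if m \<le> k then f m k else 0)"
    by (rule sum.swap)
  also have "\<dots> = (\<Sum>m\<in>{i..j}. \<Sum>k\<in>{m..j}. f m k)"
  proof (rule sum.cong[OF refl])
    fix m assume m: "m \<in> {i..j}"
    have "(\<Sum>k\<in>{i..j}. if m \<le> k then f m k else 0) = sum (\<lambda>k. f m k) {k\<in>{i..j}. m \<le> k}"
      by (rule sum.inter_filter[symmetric]) simp
    also have "{k\<in>{i..j}. m \<le> k} = {m..j}" using m by auto
    finally show "(\<Sum>k\<in>{i..j}. if m \<le> k then f m k else 0) = (\<Sum>k\<in>{m..j}. f m k)" by simp
  qed
  finally show ?thesis .
qed

lemma ut_mult_assoc: "ut_mult (ut_mult a b) c = ut_mult a (ut_mult b c)"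
proof (intro ext)
  fix i j
  have "ut_mult (ut_mult a b) c i j = (\<Sum>k\<in>{i..j}. \<Sum>m\<in>{i..k}. a i m * b m k * c k j)"
    by (simp add: ut_mult_def sum_distrib_right)
  also have "\<dots> = (\<Sum>m\<in>{i..j}. \<Sum>k\<in>{m..j}. a i m * b m k * c k j)"
    by (rule triangle_swap)
  also have "\<dots> = ut_mult a (ut_mult b c) i j"
    by (simp add: ut_mult_def sum_distrib_left mult.assoc)
  finally show "ut_mult (ut_mult a b) c i j = ut_mult a (ut_mult b c) i j" .
qed

lemma ut_mult_closed:
  assumes a: "a \<in> UT_set n" and b: "b \<in> UT_set n"
  shows "ut_mult a b \<in> UT_set n"
proof -
  have 1: "i \<in> idx n \<and> j \<in> idx n \<and> i \<le> j" if nz: "ut_mult a b i j \<noteq> 0" for i j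
  proof -
    obtain k where k: "k \<in> {i..j}" "a i k * b k j \<noteq> 0"
      using nz unfolding ut_mult_def by (meson sum.not_neutral_contains_not_neutral)
    then have "a i k \<noteq> 0" "b k j \<noteq> 0" by auto
    then show ?thesis
      using UT_zero[OF a] UT_zero[OF b] k by (meson atLeastAtMost_iff le_trans not_le)
  qed
  have 2: "ut_mult a b i i = 1" if i: "i \<in> idx n" for i
    using UT_diag[OF a i] UT_diag[OF b i] by (simp add: ut_mult_def)
  show ?thesis unfolding UT_set_def using 1 2 by blast
qed

lemma ut_one_mem: "ut_one n \<in> UT_set n"
  unfolding UT_set_def ut_one_def by auto

lemma ut_one_left: "a \<in> UT_set n \<Longrightarrow> ut_mult (ut_one n) a = a"
proof (intro ext)
  fix i j assume a: "a \<in> UT_set n"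
  show "ut_mult (ut_one n) a i j = a i j"
  proof (cases "i \<le> j")
    case True
    have "ut_mult (ut_one n) a i j = (\<Sum>k\<in>{i..j}. if k = i then ut_one n i i * a i j else 0)"
      unfolding ut_mult_def by (rule sum.cong) (auto simp: ut_one_def)
    also have "\<dots> = ut_one n i i * a i j" using True by simp
    also have "\<dots> = a i j" using UT_zero[OF a] by (auto simp: ut_one_def)
    finally show ?thesis .
  next
    case False then show ?thesis using UT_zero[OF a] by (simp add: ut_mult_def)
  qed
qed

lemma ut_one_right: "a \<in> UT_set n \<Longrightarrow> ut_mult a (ut_one n) = a"
proof (intro ext)
  fix i j assume a: "a \<in> UT_set n"
  show "ut_mult a (ut_one n) i j = a i j"
  proof (cases "i \<le> j")
    case True
    have "ut_mult a (ut_one n) i j = (\<Sum>k\<in>{i..j}. if k = j then a i j * ut_one n j j else 0)"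
      unfolding ut_mult_def by (rule sum.cong) (auto simp: ut_one_def)
    also have "\<dots> = a i j * ut_one n j j" using True by simp
    also have "\<dots> = a i j" using UT_zero[OF a] by (auto simp: ut_one_def)
    finally show ?thesis .
  next
    case False then show ?thesis using UT_zero[OF a] by (simp add: ut_mult_def)
  qed
qed

lemma monoid_UT: "monoid (UT n)"
  by (rule monoidI) (auto simp: UT_def ut_mult_closed ut_one_mem ut_mult_assoc ut_one_left ut_one_right)

function linv :: "('a::field) nmat \<Rightarrow> nat \<Rightarrow> nat \<Rightarrow> 'a" where
  "linv a i j = (if j \<le> i then (if i = j then 1 else 0) else - (\<Sum>k\<in>{i..<j}. linv a i k * a k j))"
  by pat_completeness auto
termination by (relation "measure (\<lambda>(a,i,j). j - i)") auto

declare linv.simps[simp del]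

lemma left_inv_ex:
  assumes a: "a \<in> UT_set n"
  shows "\<exists>b\<in>UT_set n. ut_mult b a = ut_one n"
proof -
  define b where "b = (\<lambda>i j. if i \<in> idx n \<and> j \<in> idx n then linv a i j else 0)"
  have bU: "b \<in> UT_set n"
    unfolding UT_set_def b_def by (auto simp: linv.simps)
  have "ut_mult b a = ut_one n"
  proof (intro ext)
    fix i j
    show "ut_mult b a i j = ut_one n i j"
    proof (cases "i < j")
      case False
      then consider "j < i" | "i = j" by linarith
      then show ?thesis
      proof cases
        case 1 then show ?thesis by (simp add: ut_mult_def ut_one_def)
      next
        case 2 then show ?thesis using UT_diag[OF a, of j]
          by (auto simp: ut_mult_def ut_one_def b_def linv.simps)
      qed
    next
      case True
      show ?thesis
      proof (cases "i \<in> idx n \<and> j \<in> idx n")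
        case False
        then have "\<forall>k. b i k * a k j = 0" using UT_zero[OF a] by (auto simp: b_def)
        then show ?thesis using True by (auto simp: ut_mult_def ut_one_def intro!: sum.neutral)
      next
        case ij: True
        have "ut_mult b a i j = (\<Sum>k\<in>{i..j}. linv a i k * a k j)"
          unfolding ut_mult_def
          by (rule sum.cong[OF refl]) (use ij idx_between in \<open>auto simp: b_def\<close>)
        also have "{i..j} = insert j {i..<j}" using True by auto
        also have "(\<Sum>k\<in>insert j {i..<j}. linv a i k * a k j) = linv a i j * a j j + (\<Sum>k\<in>{i..<j}. linv a i k * a k j)"
          by simp
        also have "\<dots> = 0" using UT_diag[OF a, of j] ij True
          by (subst linv.simps[of a i j]) simp
        finally show ?thesis using True by (simp add: ut_one_def)
      qed
    qed
  qed
  then show ?thesis using bU by blast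
qed

lemma group_UT: "group (UT n)"
  by (rule monoid.group_l_invI[OF monoid_UT]) (use left_inv_ex in \<open>auto simp: UT_def\<close>)



lemma UT_simps [simp]: "carrier (UT n) = UT_set n" "mult (UT n) = ut_mult" "one (UT n) = ut_one n"
  by (simp_all add: UT_def)

lemma one_idx: "i \<in> idx n \<Longrightarrow> 1 \<in> idx n"
  unfolding idx_def by (auto intro: order_trans[of _ "enat i"])

lemma transv_mem: "i < j \<Longrightarrow> i \<in> idx n \<Longrightarrow> j \<in> idx n \<Longrightarrow> transv n i j \<alpha> \<in> UT_set n"
  unfolding UT_set_def transv_def ut_one_def by auto

lemma L_mult:
  assumes pq: "p < q" and x: "x \<in> UT_set n"
  shows "ut_mult (transv n p q \<alpha>) x = (\<lambda>k l. x k l + (if k = p then \<alpha> * x q l else 0))"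
proof (intro ext)
  fix k l
  have "ut_mult (transv n p q \<alpha>) x k l = ut_mult (ut_one n) x k l + (\<Sum>m\<in>{k..l}. (if k = p \<and> m = q then \<alpha> else 0) * x m l)"
    by (simp add: ut_mult_def transv_def distrib_right sum.distrib)
  also have "ut_mult (ut_one n) x k l = x k l" using ut_one_left[OF x] by simp
  also have "(\<Sum>m\<in>{k..l}. (if k = p \<and> m = q then \<alpha> else 0) * x m l) = (if k = p then \<alpha> * x q l else 0)"
  proof (cases "k = p \<and> q \<le> l")
    case True then show ?thesis using pq by (simp add: if_distrib[of "\<lambda>z. z * _"] sum.delta cong: if_cong)
  next
    case False
    then have "\<forall>m\<in>{k..l}. (if k = p \<and> m = q then \<alpha> else 0) * x m l = 0" by auto
    then show ?thesis using False UT_zero(1)[OF x, of l q] by (auto intro: sum.neutral)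
  qed
  finally show "ut_mult (transv n p q \<alpha>) x k l = x k l + (if k = p then \<alpha> * x q l else 0)" .
qed

lemma R_mult:
  assumes pq: "p < q" and x: "x \<in> UT_set n"
  shows "ut_mult x (transv n p q \<alpha>) = (\<lambda>k l. x k l + (if l = q then x k p * \<alpha> else 0))"
proof (intro ext)
  fix k l
  have "ut_mult x (transv n p q \<alpha>) k l = ut_mult x (ut_one n) k l + (\<Sum>m\<in>{k..l}. x k m * (if m = p \<and> l = q then \<alpha> else 0))"
    by (simp add: ut_mult_def transv_def distrib_left sum.distrib)
  also have "ut_mult x (ut_one n) k l = x k l" using ut_one_right[OF x] by simp
  also have "(\<Sum>m\<in>{k..l}. x k m * (if m = p \<and> l = q then \<alpha> else 0)) = (if l = q then x k p * \<alpha> else 0)"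
  proof (cases "l = q \<and> k \<le> p")
    case True then show ?thesis using pq by (simp add: if_distrib[of "\<lambda>z. _ * z"] sum.delta cong: if_cong)
  next
    case False
    then have "\<forall>m\<in>{k..l}. x k m * (if m = p \<and> l = q then \<alpha> else 0) = 0" by auto
    then show ?thesis using False UT_zero(1)[OF x, of p k] by (auto intro: sum.neutral)
  qed
  finally show "ut_mult x (transv n p q \<alpha>) k l = x k l + (if l = q then x k p * \<alpha> else 0)" .
qed

lemma row_mult:
  "ut_mult (\<lambda>p q. A p q + (if p = 1 then r q else 0)) B =
   (\<lambda>p q. ut_mult A B p q + (if p = 1 then (\<Sum>m\<in>{1..q}. r m * B m q) else 0))"
  by (intro ext) (simp add: ut_mult_def distrib_right sum.distrib)

lemma transv_inv:
  assumes "i < j" "i \<in> idx n" "j \<in> idx n"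
  shows "inv\<^bsub>UT n\<^esub> (transv n i j \<alpha>) = transv n i j (- \<alpha>)"
proof -
  interpret group "UT n" by (rule group_UT)
  have "ut_mult (transv n i j (- \<alpha>)) (transv n i j \<alpha>) = ut_one n"
    using assms by (simp add: L_mult[OF assms(1) transv_mem[OF assms]]) (auto simp: transv_def ut_one_def intro!: ext)
  then show ?thesis using assms transv_mem by (intro inv_equality) auto
qed





lemma comm1:
  assumes x: "x \<in> UT_set n" and i: "1 < i" "i \<in> idx n"
  shows "comm (UT n) (transv n 1 i 1) x =
     (\<lambda>p q. ut_one n p q + (if p = 1 then ut_one n i q - (inv\<^bsub>UT n\<^esub> x) i q else 0))"
proof -
  interpret group "UT n" by (rule group_UT)
  have one: "1 \<in> idx n" using one_idx[OF i(2)] .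
  define y where "y = inv\<^bsub>UT n\<^esub> x"
  have y: "y \<in> UT_set n" using x unfolding y_def by (metis UT_simps(1) inv_closed)
  have xy: "ut_mult x y = ut_one n" using x unfolding y_def by (metis UT_simps r_inv)
  have t: "transv n 1 i 1 \<in> UT_set n" using transv_mem[OF i(1) one i(2)] .
  have ti: "inv\<^bsub>UT n\<^esub> (transv n 1 i 1) = transv n 1 i (-1)" using transv_inv[OF i(1) one i(2)] .
  define X1 where "X1 = ut_mult (transv n 1 i 1) x"
  have X1: "X1 = (\<lambda>k l. x k l + (if k = 1 then x i l else 0))"
    unfolding X1_def L_mult[OF i(1) x] by (intro ext) simp
  have X1m: "X1 \<in> UT_set n" unfolding X1_def using ut_mult_closed[OF t x] .
  define X2 where "X2 = ut_mult X1 (transv n 1 i (-1))"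
  have xk1: "x k 1 = (if k = 1 then 1 else 0)" for k
    using UT_zero(1)[OF x, of 1 k] UT_zero(2)[OF x, of 0 1] UT_diag[OF x one]
    by (cases k) (auto simp: idx_def)
  have xi1: "x i 1 = 0" using UT_zero(1)[OF x] i by simp
  have X2: "X2 = (\<lambda>k l. x k l + (if k = 1 then x i l - (if l = i then 1 else 0) else 0))"
    unfolding X2_def R_mult[OF i(1) X1m] unfolding X1 using i(1) by (auto simp: xk1 xi1 xk1[simplified] xi1[simplified] intro!: ext)
  have X2m: "X2 \<in> UT_set n" unfolding X2_def using ut_mult_closed[OF X1m transv_mem[OF i(1) one i(2)]] .
  have sum1: "(\<Sum>m\<in>{1..q}. x i m * y m q) = ut_mult x y i q" for q
    unfolding ut_mult_def
  proof (rule sum.mono_neutral_right)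
    show "{i..q} \<subseteq> {1..q}" using i by auto
    show "\<forall>m\<in>{1..q} - {i..q}. x i m * y m q = 0" using UT_zero(1)[OF x] UT_zero(1)[OF y] by auto
  qed simp
  have sum2: "(\<Sum>m\<in>{1..q}. (if m = i then 1 else 0) * y m q) = y i q" for q
    using UT_zero(1)[OF y, of q i] i by (simp add: if_distrib[of "\<lambda>z. z * _"] sum.delta cong: if_cong)
  have "comm (UT n) (transv n 1 i 1) x = ut_mult X2 y"
    unfolding comm_def X2_def X1_def y_def ti by simp
  also have "\<dots> = (\<lambda>p q. ut_one n p q + (if p = 1 then ut_one n i q - y i q else 0))"
  proof -
    have S: "(\<Sum>m\<in>{1..q}. (x i m - (if m = i then 1 else 0)) * y m q) = ut_one n i q - y i q" for q
      by (simp only: left_diff_distrib sum_subtractf sum1 sum2 xy)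
    show ?thesis unfolding X2 row_mult xy S ..
  qed
  finally show ?thesis unfolding y_def .
qed

lemma comm2:
  fixes c :: "('a::field) nmat"
  assumes c: "c \<in> UT_set n" and cf: "\<And>p q. c p q = ut_one n p q + (if p = 1 then w q else 0)"
    and kl: "2 \<le> k" "k < l" "k \<in> idx n" "l \<in> idx n"
  shows "comm (UT n) c (transv n k l 1) = transv n 1 l (w k)"
proof -
  interpret group "UT n" by (rule group_UT)
  have one: "1 \<in> idx n" using one_idx[OF kl(3)] .
  define s where "s = (transv n k l 1 :: 'a nmat)"
  define T where "T = (transv n 1 l (w k) :: 'a nmat)"
  have s: "s \<in> UT_set n" unfolding s_def using transv_mem kl by auto
  have T: "T \<in> UT_set n" unfolding T_def using transv_mem[of 1 l n] kl one by auto
  have sc: "ut_mult s c \<in> UT_set n" using ut_mult_closed[OF s c] .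
  have sce: "ut_mult s c = (\<lambda>p q. c p q + (if p = k then 1 * c l q else 0))"
    unfolding s_def using L_mult[OF kl(2) c] .
  have cse: "ut_mult c s = (\<lambda>p q. c p q + (if q = l then c p k * 1 else 0))"
    unfolding s_def using R_mult[OF kl(2) c] .
  have Tsc: "ut_mult T (ut_mult s c) = (\<lambda>p q. ut_mult s c p q + (if p = 1 then w k * ut_mult s c l q else 0))"
    unfolding T_def using L_mult[OF _ sc, of 1 l "w k"] kl by simp
  have "ut_mult c s = ut_mult T (ut_mult s c)"
    unfolding Tsc cse using kl by (auto simp: sce cf ut_one_def intro!: ext)
  then have "c \<otimes>\<^bsub>UT n\<^esub> s = T \<otimes>\<^bsub>UT n\<^esub> s \<otimes>\<^bsub>UT n\<^esub> c" using T s c by (simp add: ut_mult_assoc)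
  then have "comm (UT n) c s = T \<otimes>\<^bsub>UT n\<^esub> s \<otimes>\<^bsub>UT n\<^esub> c \<otimes>\<^bsub>UT n\<^esub> inv\<^bsub>UT n\<^esub> c \<otimes>\<^bsub>UT n\<^esub> inv\<^bsub>UT n\<^esub> s"
    unfolding comm_def by simp
  also have "\<dots> = T"
  proof -
    have T': "T \<in> carrier (UT n)" and s': "s \<in> carrier (UT n)" and c': "c \<in> carrier (UT n)"
      using T s c by simp_all
    show ?thesis using T' s' c' by (simp add: m_assoc del: UT_simps)
  qed
  finally show ?thesis unfolding s_def T_def .
qed


lemma comm_closed: "x \<in> UT_set n \<Longrightarrow> y \<in> UT_set n \<Longrightarrow> comm (UT n) x y \<in> UT_set n"
proof -
  interpret group "UT n" by (rule group_UT)
  assume "x \<in> UT_set n" "y \<in> UT_set n"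
  then show ?thesis unfolding comm_def using inv_closed m_closed by (metis UT_simps(1))
qed

lemma inv_mem: "x \<in> UT_set n \<Longrightarrow> inv\<^bsub>UT n\<^esub> x \<in> UT_set n"
proof -
  interpret group "UT n" by (rule group_UT)
  assume "x \<in> UT_set n" then show ?thesis using inv_closed by (metis UT_simps(1))
qed

lemma entry_formula:
  assumes x: "x \<in> UT_set n" and ij: "i < j" "i \<in> idx n" "j \<in> idx n"
  shows "x i j = - (inv\<^bsub>UT n\<^esub> x) i j - (\<Sum>m\<in>{i<..<j}. x i m * (inv\<^bsub>UT n\<^esub> x) m j)"
proof -
  interpret group "UT n" by (rule group_UT)
  define y where "y = inv\<^bsub>UT n\<^esub> x"
  have y: "y \<in> UT_set n" unfolding y_def using inv_mem[OF x] .
  have xy: "ut_mult x y = ut_one n" using x unfolding y_def by (metis UT_simps r_inv)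
  have "0 = ut_mult x y i j" using ij by (simp add: xy ut_one_def)
  also have "\<dots> = (\<Sum>m\<in>insert i (insert j {i<..<j}). x i m * y m j)"
    unfolding ut_mult_def using ij(1) by (intro sum.cong) auto
  also have "\<dots> = x i i * y i j + (x i j * y j j + (\<Sum>m\<in>{i<..<j}. x i m * y m j))"
    using ij(1) by simp
  also have "\<dots> = y i j + x i j + (\<Sum>m\<in>{i<..<j}. x i m * y m j)"
    using UT_diag[OF x ij(2)] UT_diag[OF y ij(3)] by simp
  finally have "0 = y i j + x i j + (\<Sum>m\<in>{i<..<j}. x i m * y m j)" .
  then have "x i j = - y i j - (\<Sum>m\<in>{i<..<j}. x i m * y m j)"
  proof -
    assume e: "0 = y i j + x i j + (\<Sum>m\<in>{i<..<j}. x i m * y m j)"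
    have "x i j = (y i j + x i j + (\<Sum>m\<in>{i<..<j}. x i m * y m j)) - y i j - (\<Sum>m\<in>{i<..<j}. x i m * y m j)" by simp
    also have "\<dots> = - y i j - (\<Sum>m\<in>{i<..<j}. x i m * y m j)" by (subst e[symmetric]) simp
    finally show ?thesis .
  qed
  then show ?thesis unfolding y_def .
qed

lemma idx_suc: "j \<in> idx n \<Longrightarrow> enat j \<le> n - 1 \<Longrightarrow> Suc j \<in> idx n"
  unfolding idx_def by (cases n) (auto simp: one_enat_def)


theorem mainTheorem1:
  fixes n :: enat and \<phi> :: "('a::field) nmat \<Rightarrow> 'a nmat"
  assumes "PC_map (UT n) \<phi>"
    and "almost_identity n \<phi>"
  shows "\<forall>a\<in>carrier (UT n). \<forall>i\<in>idx n. \<forall>j\<in>idx n. 2 \<le> i \<and> enat j \<le> n - 1 \<longrightarrow>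
           \<phi> a i j = a i j \<and> (inv\<^bsub>UT n\<^esub> (\<phi> a)) i j = (inv\<^bsub>UT n\<^esub> a) i j"
proof -
  have bij: "bij_betw \<phi> (UT_set n) (UT_set n)"
    and pc: "\<And>x y. x \<in> UT_set n \<Longrightarrow> y \<in> UT_set n \<Longrightarrow> \<phi> (comm (UT n) x y) = comm (UT n) (\<phi> x) (\<phi> y)"
  proof -
    have h: "bij_betw \<phi> (carrier (UT n)) (carrier (UT n)) \<and>
     (\<forall>x\<in>carrier (UT n). \<forall>y\<in>carrier (UT n). \<phi> (comm (UT n) x y) = comm (UT n) (\<phi> x) (\<phi> y))"
      using assms(1) unfolding PC_map_def .
    show "bij_betw \<phi> (UT_set n) (UT_set n)" using conjunct1[OF h] by (simp only: UT_simps)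
    show "\<And>x y. x \<in> UT_set n \<Longrightarrow> y \<in> UT_set n \<Longrightarrow> \<phi> (comm (UT n) x y) = comm (UT n) (\<phi> x) (\<phi> y)"
      using conjunct2[OF h] by (simp only: UT_simps)
  qed
  have phimem: "\<phi> x \<in> UT_set n" if "x \<in> UT_set n" for x
    by (rule bij_betw_apply[OF bij that])
  have ai: "\<phi> (transv n i j \<alpha>) = transv n i j \<alpha>" if "i \<in> idx n" "j \<in> idx n" "i < j" for i j \<alpha>
  proof -
    have "\<forall>i\<in>idx n. \<forall>j\<in>idx n. \<forall>\<alpha>. i < j \<longrightarrow> \<phi> (transv n i j \<alpha>) = transv n i j \<alpha>"
      using assms(2) unfolding almost_identity_def .
    then show ?thesis using that by blast
  qed
  have key: "(inv\<^bsub>UT n\<^esub> (\<phi> a)) i k = (inv\<^bsub>UT n\<^esub> a) i k"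
    if a: "a \<in> UT_set n" and ik: "2 \<le> i" "i < k" "i \<in> idx n" "k \<in> idx n" "l \<in> idx n" "k < l" for a i k l
  proof -
    have one: "1 \<in> idx n" using one_idx[OF ik(3)] .
    define t where "t = (transv n 1 i 1 :: 'a nmat)"
    define s where "s = (transv n k l 1 :: 'a nmat)"
    have t: "t \<in> UT_set n" unfolding t_def using transv_mem[of 1 i n] ik one by auto
    have s: "s \<in> UT_set n" unfolding s_def using transv_mem[of k l n] ik by auto
    have pt: "\<phi> t = t" unfolding t_def using ai[of 1 i] ik one by auto
    have ps: "\<phi> s = s" unfolding s_def using ai[of k l] ik by auto
    have gen: "comm (UT n) (comm (UT n) t x) s = transv n 1 l (ut_one n i k - (inv\<^bsub>UT n\<^esub> x) k' k)"
      if "x \<in> UT_set n" "k' = i" for x k'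
      unfolding t_def s_def
      by (rule comm2[OF comm_closed[OF t[unfolded t_def] that(1)]]) (use comm1[OF that(1), of i] ik that(2) in auto)
    have pa: "\<phi> a \<in> UT_set n" using phimem[OF a] .
    have "\<phi> (comm (UT n) (comm (UT n) t a) s) = comm (UT n) (comm (UT n) t (\<phi> a)) s"
      using pc[OF comm_closed[OF t a] s] pc[OF t a] pt ps by simp
    then have "\<phi> (transv n 1 l (ut_one n i k - (inv\<^bsub>UT n\<^esub> a) i k)) = transv n 1 l (ut_one n i k - (inv\<^bsub>UT n\<^esub> (\<phi> a)) i k)"
      using gen[OF a refl] gen[OF pa refl] by simp
    then have "transv n 1 l (ut_one n i k - (inv\<^bsub>UT n\<^esub> a) i k) = transv n 1 l (ut_one n i k - (inv\<^bsub>UT n\<^esub> (\<phi> a)) i k)"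
      using ai[of 1 l] one ik by simp
    then have "transv n 1 l (ut_one n i k - (inv\<^bsub>UT n\<^esub> a) i k) 1 l = transv n 1 l (ut_one n i k - (inv\<^bsub>UT n\<^esub> (\<phi> a)) i k) 1 l"
      by simp
    then show ?thesis using ik by (simp add: transv_def ut_one_def)
  qed
  have invpart: "(inv\<^bsub>UT n\<^esub> (\<phi> a)) i j = (inv\<^bsub>UT n\<^esub> a) i j"
    if a: "a \<in> UT_set n" and ij: "i \<in> idx n" "j \<in> idx n" "2 \<le> i" "enat j \<le> n - 1" for a i j
  proof -
    have pa: "\<phi> a \<in> UT_set n" using phimem[OF a] .
    consider "j < i" | "i = j" | "i < j" by linarith
    then show ?thesis
    proof cases
      case 1 then show ?thesis using UT_zero(1)[OF inv_mem[OF a]] UT_zero(1)[OF inv_mem[OF pa]] by simp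
    next
      case 2 then show ?thesis using UT_diag[OF inv_mem[OF a]] UT_diag[OF inv_mem[OF pa]] ij by simp
    next
      case 3 then show ?thesis using key[OF a ij(3) 3 ij(1,2) idx_suc[OF ij(2,4)]] by simp
    qed
  qed
  have entpart: "\<forall>i j. j - i = d \<longrightarrow> i \<in> idx n \<longrightarrow> j \<in> idx n \<longrightarrow> 2 \<le> i \<longrightarrow> enat j \<le> n - 1 \<longrightarrow> \<phi> a i j = a i j"
    if a: "a \<in> UT_set n" for a d
  proof (induction d rule: less_induct)
    case (less d)
    have pa: "\<phi> a \<in> UT_set n" using phimem[OF a] .
    show ?case
    proof (intro allI impI)
      fix i j assume dd: "j - i = d" and ij: "i \<in> idx n" "j \<in> idx n" "2 \<le> i" "enat j \<le> n - 1"
      consider "j < i" | "i = j" | "i < j" by linarith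
      then show "\<phi> a i j = a i j"
      proof cases
        case 1 then show ?thesis using UT_zero(1)[OF a] UT_zero(1)[OF pa] by simp
      next
        case 2 then show ?thesis using UT_diag[OF a] UT_diag[OF pa] ij by simp
      next
        case 3
        have mid: "\<phi> a i m * (inv\<^bsub>UT n\<^esub> (\<phi> a)) m j = a i m * (inv\<^bsub>UT n\<^esub> a) m j" if m: "m \<in> {i<..<j}" for m
        proof -
          have midx: "m \<in> idx n" using idx_between[OF ij(1,2), of m] m by auto
          have mle: "enat m \<le> n - 1" using m ij(4) by (meson greaterThanLessThan_iff enat_ord_simps(1) less_imp_le order_trans)
          have "\<phi> a i m = a i m" using less.IH[of "m - i"] m dd ij midx mle by auto
          moreover have "(inv\<^bsub>UT n\<^esub> (\<phi> a)) m j = (inv\<^bsub>UT n\<^esub> a) m j"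
            using invpart[OF a midx ij(2) _ ij(4)] m ij(3) by auto
          ultimately show ?thesis by simp
        qed
        have S: "(\<Sum>m\<in>{i<..<j}. \<phi> a i m * (inv\<^bsub>UT n\<^esub> (\<phi> a)) m j) = (\<Sum>m\<in>{i<..<j}. a i m * (inv\<^bsub>UT n\<^esub> a) m j)"
          by (rule sum.cong[OF refl mid])
        show ?thesis
          using entry_formula[OF a 3 ij(1,2)] entry_formula[OF pa 3 ij(1,2)] invpart[OF a ij] S
          by simp
      qed
    qed
  qed
  show ?thesis using invpart entpart by auto
qed


end
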